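(* Let $1\le l\le m$ and $0\le r<m-l$, and let $C=\Gamma_2G$ be the binary convolutional code generated by the semi-infinite matrix $G$ built from $G_0,\dots,G_{2^l-1}$ as described in the context. Then the free distance of the Euclidean dual $C^\perp$ equals $2^{r+1}$.
   Context: For $u,v\in\mathbf F_2^N$ the boolean product is $uv=(u_1v_1,\dots,u_Nv_N)$; a product of $i$ vectors has degree $i$. For $s\ge1$ let $b_0\in\mathbf F_2^{2^s}$ be the all-ones vector and for $1\le i\le s$ let $b_i\in\mathbf F_2^{2^s}$ be the concatenation of $2^{s-i}$ blocks $(\mathbf 0\,\mathbf 1)$, where $\mathbf 0,\mathbf 1\in\mathbf F_2^{2^{i-1}}$ are constant. Let $B_s^i$ be the matrix whose rows are all products of $i$ distinct elements of $\{b_1,\dots,b_s\}$ (with $B_s^0=b_0$; $B_s^i$ is empty for $i<0$ or $i>s$), and let $G_s^r$ be the matrix with rows $B_s^r,B_s^{r-1},\dots,B_s^0$ stacked (empty if $r<0$); it generates the Reed–Muller code $\mathcal R(r,s)$ of length $2^s$, dimension $\sum_{i=0}^r\binom si$, minimum distance $2^{s-r}$, with $\mathcal R(r,s)^\perp=\mathcal R(s-1-r,s)$. Let $w_j=(1,1,0,\dots,0)\in\mathbf F_2^{2^j}$ and $c\,w_j$ the concatenation of $c$ copies. For $0\le i\le l-1$ let $M_{i,l}=(2^{l-i-1}w_{i+1})\otimes B_{m-l}^{r-i}$ (Kronecker product; a $\binom{m-l}{r-i}\times2^m$ matrix) and $M_{l,l}=[G_{m-l}^{r-l}\ 0\ \cdots\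 0]$ ($2^m$ columns). Define $G_0,\dots,G_{2^l-1}$, each with $2^{m-l}$ columns, by $[G_0\ G_1\ \cdots\ G_{2^l-1}]$ = the matrix with row blocks $M_{0,l},\dots,M_{l,l}$ stacked. Then $G$ is the semi-infinite matrix whose $j$-th block row ($j\ge0$) has $G_0,G_1,\dots,G_{2^l-1}$ in block columns $j,j+1,\dots,j+2^l-1$ and zeros elsewhere. $\Gamma_2$ is the set of finitely supported binary sequences, $\Gamma_2G$ the set of finite linear combinations of rows of $G$, $C^\perp=\{u\in\Gamma_2:\sum_iu_iv_i=0\ \forall v\in C\}$; free distance = minimum number of nonzero entries of a nonzero element. *)

theory Defs
  imports Main
begin

text \<open>Binary vectors of F_2^N are bool lists (True = 1); binary sequences
  (elements of F_2^omega) are functions nat => bool, addition is pointwise xor.\<close>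

definition bvec :: "nat \<Rightarrow> nat \<Rightarrow> bool list" where
  "bvec s i = concat (replicate (2^(s-i))
       (replicate (2^(i-1)) False @ replicate (2^(i-1)) True))"

text \<open>Boolean (componentwise) product of the b_i, i in S; the empty product is b_0 = all ones.\<close>
definition bprod :: "nat \<Rightarrow> nat set \<Rightarrow> bool list" where
  "bprod s S = map (\<lambda>k. \<forall>i\<in>S. bvec s i ! k) [0..<2^s]"

text \<open>Rows of B_s^i: all products of i distinct elements of {b_1..b_s}
  (B_s^0 = b_0; empty for i<0 or i>s).\<close>
definition Brows :: "nat \<Rightarrow> int \<Rightarrow> bool list set" where
  "Brows s i = (if i < 0 \<or> i > int s then {}
     else {bprod s S | S. S \<subseteq> {1..s} \<and> int (card S) = i})"

text \<open>Rows of G_s^r (generator of R(r,s)); empty if r<0.\<close>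
definition Grows :: "nat \<Rightarrow> int \<Rightarrow> bool list set" where
  "Grows s r = (\<Union>i\<in>{0..r}. Brows s i)"

definition wvec :: "nat \<Rightarrow> bool list" where
  "wvec j = [True, True] @ replicate (2^j - 2) False"

definition wrep :: "nat \<Rightarrow> nat \<Rightarrow> bool list" where
  "wrep c j = concat (replicate c (wvec j))"

definition kron :: "bool list \<Rightarrow> bool list \<Rightarrow> bool list" where
  "kron a b = concat (map (\<lambda>x. map (\<lambda>y. x \<and> y) b) a)"

text \<open>Rows of the stacked matrix [G_0 G_1 ... G_(2^l-1)] = (M_{0,l}; ...; M_{l,l}).\<close>
definition Mrows :: "nat \<Rightarrow> nat \<Rightarrow> nat \<Rightarrow> bool list set" where
  "Mrows m l r =
     (\<Union>i\<in>{0..<l}. {kron (wrep (2^(l-i-1)) (i+1)) v | v. v \<in> Brows (m-l) (int r - int i)})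
     \<union> {v @ replicate (2^m - 2^(m-l)) False | v. v \<in> Grows (m-l) (int r - int l)}"

text \<open>Rows of the semi-infinite matrix G: the j-th block row places G_0..G_(2^l-1)
  in block columns j..j+2^l-1 (blocks of width 2^(m-l)), zeros elsewhere.\<close>
definition shift_row :: "nat \<Rightarrow> nat \<Rightarrow> bool list \<Rightarrow> nat \<Rightarrow> bool" where
  "shift_row n j v t = (j*n \<le> t \<and> t < j*n + length v \<and> v ! (t - j*n))"

definition Grows_inf :: "nat \<Rightarrow> nat \<Rightarrow> nat \<Rightarrow> (nat \<Rightarrow> bool) set" where
  "Grows_inf m l r = {shift_row (2^(m-l)) j v | j v. v \<in> Mrows m l r}"

definition Gamma2 :: "(nat \<Rightarrow> bool) set" where
  "Gamma2 = {u. finite {i. u i}}"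

definition xorv :: "(nat \<Rightarrow> bool) \<Rightarrow> (nat \<Rightarrow> bool) \<Rightarrow> nat \<Rightarrow> bool" where
  "xorv u v = (\<lambda>i. u i \<noteq> v i)"

inductive_set f2span :: "(nat \<Rightarrow> bool) set \<Rightarrow> (nat \<Rightarrow> bool) set" for R where
  zero: "(\<lambda>_. False) \<in> f2span R"
| add: "v \<in> R \<Longrightarrow> x \<in> f2span R \<Longrightarrow> xorv v x \<in> f2span R"

definition convcode :: "nat \<Rightarrow> nat \<Rightarrow> nat \<Rightarrow> (nat \<Rightarrow> bool) set" where
  "convcode m l r = f2span (Grows_inf m l r)"

definition dual_code :: "(nat \<Rightarrow> bool) set \<Rightarrow> (nat \<Rightarrow> bool) set" where
  "dual_code C = {u \<in> Gamma2. \<forall>v\<in>C. even (card {i. u i \<and> v i})}"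

definition weight :: "(nat \<Rightarrow> bool) \<Rightarrow> nat" where
  "weight u = card {i. u i}"

definition free_distance :: "(nat \<Rightarrow> bool) set \<Rightarrow> nat" where
  "free_distance C = Inf {weight u | u. u \<in> C \<and> u \<noteq> (\<lambda>_. False)}"

end

theory Submission
  imports Defs
begin


lemma bit_lt_pow: "(k::nat) < 2^q \<Longrightarrow> q \<le> t \<Longrightarrow> \<not> bit k t"
proof -
  assume a: "k < 2^q" "q \<le> t"
  have "k < 2^t" using a by (meson order_less_le_trans one_le_numeral power_increasing)
  then show ?thesis by (simp add: bit_iff_odd)
qed

lemma set_bit_lt: "(k::nat) < 2^q \<Longrightarrow> p < q \<Longrightarrow> set_bit p k < 2^q"
  by (metis take_bit_set_bit_eq take_bit_nat_eq_self_iff not_le)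

lemma unset_bit_lt: "(k::nat) < 2^q \<Longrightarrow> p < q \<Longrightarrow> unset_bit p k < 2^q"
  by (metis take_bit_unset_bit_eq take_bit_nat_eq_self_iff not_le)

lemma flip_even:
  fixes P :: "nat \<Rightarrow> bool"
  assumes pq: "p < q"
    and hP: "\<And>k k'. (\<And>t. t \<noteq> p \<Longrightarrow> bit k t = bit k' t) \<Longrightarrow> P k = P k'"
  shows "even (card {k. k < 2^q \<and> P k})"
proof -
  define X where "X = {k. k < (2::nat)^q \<and> P k}"
  define X0 where "X0 = {k\<in>X. \<not> bit k p}"
  define X1 where "X1 = {k\<in>X. bit k p}"
  have fin: "finite X" unfolding X_def by auto
  have "X = X0 \<union> X1" "X0 \<inter> X1 = {}" unfolding X0_def X1_def by auto
  then have c: "card X = card X0 + card X1"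
    using fin by (metis X0_def X1_def card_Un_disjoint finite_Un)
  have "bij_betw (set_bit p) X0 X1"
  proof (rule bij_betw_byWitness[where f'="unset_bit p"])
    show "\<forall>a\<in>X0. unset_bit p (set_bit p a) = a"
      unfolding X0_def by (auto intro!: bit_eqI simp: bit_set_bit_iff bit_unset_bit_iff)
    show "\<forall>a\<in>X1. set_bit p (unset_bit p a) = a"
      unfolding X1_def by (auto intro!: bit_eqI simp: bit_set_bit_iff bit_unset_bit_iff)
    show "set_bit p ` X0 \<subseteq> X1"
    proof
      fix y assume "y \<in> set_bit p ` X0"
      then obtain k where k: "k \<in> X0" "y = set_bit p k" by auto
      have "P y = P k" by (rule hP) (simp add: k bit_set_bit_iff)
      then show "y \<in> X1" using k pq set_bit_lt unfolding X0_def X1_def X_def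
        by (auto simp: bit_set_bit_iff)
    qed
    show "unset_bit p ` X1 \<subseteq> X0"
    proof
      fix y assume "y \<in> unset_bit p ` X1"
      then obtain k where k: "k \<in> X1" "y = unset_bit p k" by auto
      have "P y = P k" by (rule hP) (simp add: k bit_unset_bit_iff)
      then show "y \<in> X0" using k pq unset_bit_lt unfolding X0_def X1_def X_def
        by (auto simp: bit_unset_bit_iff)
    qed
  qed
  then have "card X0 = card X1" by (rule bij_betw_same_card)
  then show ?thesis using c X_def by simp
qed

definition mono_of :: "nat set \<Rightarrow> nat \<Rightarrow> bool" where
  "mono_of T k = (\<forall>i\<in>T. bit k (i - 1))"

lemma rm_dist:
  fixes s r :: nat
  assumes "A \<subseteq> {..<2^s}" "A \<noteq> {}"
    and "\<And>T. T \<subseteq> {1..s} \<Longrightarrow> card T \<le> r \<Longrightarrow> even (card {k\<in>A. mono_of T k})"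
  shows "2^(r+1) \<le> card A"
  using assms
proof (induction r arbitrary: A)
  case 0
  have fA: "finite A" using finite_subset[OF 0(1)] by simp
  have "even (card {k\<in>A. mono_of {} k})" using 0(3)[of "{}"] by simp
  then have "even (card A)" by (simp add: mono_of_def)
  moreover have "card A \<noteq> 0" using fA 0(2) by simp
  ultimately have "card A \<ge> 2" by presburger
  then show ?case by simp
next
  case (Suc r)
  have fA: "finite A" using finite_subset[OF Suc(2)] by simp
  have ev: "even (card A)" using Suc(4)[of "{}"] by (simp add: mono_of_def)
  have "card A \<noteq> 0" using fA Suc(3) by simp
  with ev have "card A \<ge> 2" by presburger
  then obtain a b where ab: "a \<in> A" "b \<in> A" "a \<noteq> b"
  proof -
    have "\<not> card A \<le> Suc 0" using \<open>card A \<ge> 2\<close> by simp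
    then show ?thesis using that by (auto simp: card_le_Suc0_iff_eq[OF fA])
  qed
  have "\<exists>t. bit a t \<noteq> bit b t" using ab(3) bit_eq_iff[of a b] by auto
  then obtain t where t: "bit a t \<noteq> bit b t" by blast
  have as: "a < 2^s" "b < 2^s" using ab Suc(2) by auto
  have ts: "t < s"
  proof (rule ccontr)
    assume "\<not> t < s"
    then have "\<not> bit a t" "\<not> bit b t" using bit_lt_pow as by auto
    with t show False by simp
  qed
  define A1 where "A1 = {k\<in>A. bit k t}"
  define A0 where "A0 = {k\<in>A. \<not> bit k t}"
  have AU: "A = A0 \<union> A1" unfolding A0_def A1_def by auto
  have "card (A0 \<union> A1) = card A0 + card A1"
    by (rule card_Un_disjoint) (use fA in \<open>auto simp: A0_def A1_def\<close>)
  then have c: "card A = card A0 + card A1" using AU by simp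
  have ne: "A0 \<noteq> {}" "A1 \<noteq> {}" using ab t unfolding A0_def A1_def by auto
  have e1: "even (card {k\<in>A1. mono_of T k})" if T: "T \<subseteq> {1..s}" "card T \<le> r" for T
  proof -
    have "{k\<in>A1. mono_of T k} = {k\<in>A. mono_of (insert (t+1) T) k}"
      unfolding A1_def mono_of_def by auto
    moreover have "card (insert (t+1) T) \<le> Suc r"
    proof -
      have "finite T" using T finite_subset by blast
      then show ?thesis using T by (simp add: card_insert_if)
    qed
    moreover have "insert (t+1) T \<subseteq> {1..s}" using T ts by auto
    ultimately show ?thesis using Suc(4) by simp
  qed
  have e0: "even (card {k\<in>A0. mono_of T k})" if T: "T \<subseteq> {1..s}" "card T \<le> r" for T
  proof -
    have "{k\<in>A0. mono_of T k} = {k\<in>A. mono_of T k} - {k\<in>A1. mono_of T k}"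
      unfolding A0_def A1_def by auto
    moreover have "card ({k\<in>A. mono_of T k} - {k\<in>A1. mono_of T k}) = card {k\<in>A. mono_of T k} - card {k\<in>A1. mono_of T k}"
      by (rule card_Diff_subset) (use fA A1_def in auto)
    moreover have "card {k\<in>A1. mono_of T k} \<le> card {k\<in>A. mono_of T k}"
      by (rule card_mono) (use fA A1_def in auto)
    moreover have "even (card {k\<in>A. mono_of T k})" using Suc(4) T by simp
    ultimately show ?thesis using e1[OF T] by (simp add: even_diff_nat)
  qed
  have "2^(r+1) \<le> card A0" by (rule Suc.IH) (use Suc(2) ne e0 A0_def in auto)
  moreover have "2^(r+1) \<le> card A1" by (rule Suc.IH) (use Suc(2) ne e1 A1_def in auto)
  ultimately show ?case using c by simp
qed


lemma concat_rep_nth: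
  "length xs = L \<Longrightarrow> k < c * L \<Longrightarrow> concat (replicate c xs) ! k = xs ! (k mod L)"
proof (induction c arbitrary: k)
  case 0 then show ?case by simp
next
  case (Suc c)
  show ?case
  proof (cases "k < L")
    case True then show ?thesis using Suc.prems by (simp add: nth_append)
  next
    case False
    then have "concat (replicate (Suc c) xs) ! k = concat (replicate c xs) ! (k - L)"
      using Suc.prems by (simp add: nth_append)
    also have "\<dots> = xs ! ((k - L) mod L)" using Suc False by (intro Suc.IH) auto
    also have "(k - L) mod L = k mod L" using False by (simp add: mod_if)
    finally show ?thesis .
  qed
qed

lemma bvec_nth:
  assumes "1 \<le> i" "i \<le> s" "k < 2^s"
  shows "bvec s i ! k = bit k (i - 1)"
proof -
  define h :: nat where "h = 2^(i-1)"
  have hL: "2 * h = 2^i" unfolding h_def using assms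
    by (metis Suc_diff_le diff_Suc_1 power_Suc)
  have cL: "2^(s-i) * (2*h) = (2::nat)^s" using hL assms
    by (metis le_add_diff_inverse2 power_add)
  define blk where "blk = replicate h False @ replicate h True"
  have lb: "length blk = 2*h" unfolding blk_def by simp
  have "bvec s i ! k = blk ! (k mod (2*h))"
    unfolding bvec_def h_def[symmetric] blk_def[symmetric]
    by (rule concat_rep_nth[OF lb]) (use cL assms in simp)
  also have "\<dots> = (h \<le> k mod (2*h))"
  proof -
    have "2*h > 0" unfolding h_def by simp
    then have "k mod (2*h) < 2*h" by (rule mod_less_divisor)
    then show ?thesis unfolding blk_def by (auto simp: nth_append)
  qed
  also have "\<dots> = odd (k div h)"
  proof -
    have hp: "h > 0" unfolding h_def by simp
    have "k mod (h*2) = h * (k div h mod 2) + k mod h" by (rule mod_mult2_eq)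
    moreover have "k mod h < h" using hp by simp
    ultimately show ?thesis
      by (cases "even (k div h)") (simp_all add: mult.commute odd_iff_mod_2_eq_one even_iff_mod_2_eq_zero)
  qed
  also have "\<dots> = bit k (i-1)" unfolding h_def by (simp add: bit_iff_odd)
  finally show ?thesis .
qed

lemma bprod_len: "length (bprod s S) = 2^s"
  by (simp add: bprod_def)

lemma bprod_nth: "S \<subseteq> {1..s} \<Longrightarrow> k < 2^s \<Longrightarrow> bprod s S ! k = mono_of S k"
proof -
  assume a: "S \<subseteq> {1..s}" "k < 2^s"
  have "bprod s S ! k = (\<forall>i\<in>S. bvec s i ! k)" using a(2) by (simp add: bprod_def)
  also have "\<dots> = mono_of S k" unfolding mono_of_def
    using a bvec_nth by (metis (no_types, lifting) atLeastAtMost_iff subsetD)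
  finally show ?thesis .
qed



lemma wrep_cons: "c \<ge> 1 \<Longrightarrow> \<exists>a'. wrep c j = True # a'"
proof -
  assume "c \<ge> 1"
  then obtain c' where "c = Suc c'" by (cases c) auto
  then show ?thesis by (simp add: wrep_def wvec_def)
qed

lemma kron_first: "kron (True # a') v = v @ kron a' v"
proof -
  have "map ((\<and>) True) v = v" by (induction v) auto
  then show ?thesis by (simp add: kron_def)
qed

lemma Brows_mem: "v \<in> Brows s x \<Longrightarrow> \<exists>S. S \<subseteq> {1..s} \<and> int (card S) = x \<and> v = bprod s S"
  unfolding Brows_def by (cases "x < 0 \<or> x > int s") auto

lemma Grows_mem: "v \<in> Grows s x \<Longrightarrow> \<exists>S. S \<subseteq> {1..s} \<and> int (card S) \<le> x \<and> v = bprod s S"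
proof -
  assume "v \<in> Grows s x"
  then obtain y where y: "y \<in> {0..x}" "v \<in> Brows s y" unfolding Grows_def by blast
  obtain S where "S \<subseteq> {1..s}" "int (card S) = y" "v = bprod s S" using Brows_mem[OF y(2)] by blast
  then show ?thesis using y(1) by auto
qed

lemma row_first_block:
  assumes "w \<in> Mrows m l r" "l \<le> m"
  shows "\<exists>S. S \<subseteq> {1..m-l} \<and> card S \<le> r \<and> 2^(m-l) \<le> length w \<and>
           (\<forall>k<2^(m-l). w ! k = mono_of S k)"
  using assms(1) unfolding Mrows_def
proof (elim UnE)
  assume "w \<in> (\<Union>i\<in>{0..<l}. {kron (wrep (2^(l-i-1)) (i+1)) v | v. v \<in> Brows (m-l) (int r - int i)})"
  then obtain i v where iv: "i < l" "v \<in> Brows (m-l) (int r - int i)"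
    "w = kron (wrep (2^(l-i-1)) (i+1)) v" by auto
  obtain S where S: "S \<subseteq> {1..m-l}" "int (card S) = int r - int i" "v = bprod (m-l) S"
    using Brows_mem[OF iv(2)] by blast
  obtain a' where a': "wrep (2^(l-i-1)) (i+1) = True # a'" using wrep_cons by force
  have w: "w = v @ kron a' v" using iv(3) a' kron_first by simp
  have lv: "length v = 2^(m-l)" using S(3) bprod_len by simp
  show ?thesis
  proof (intro exI conjI allI impI)
    show "S \<subseteq> {1..m-l}" by (rule S(1))
    show "card S \<le> r" using S(2) by linarith
    show "2^(m-l) \<le> length w" using w lv by simp
    fix k assume "k < (2::nat)^(m-l)"
    then show "w ! k = mono_of S k" using w lv S bprod_nth by (simp add: nth_append)
  qed
next
  assume "w \<in> {v @ replicate (2^m - 2^(m-l)) False | v. v \<in> Grows (m-l) (int r - int l)}"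
  then obtain v where v: "v \<in> Grows (m-l) (int r - int l)" "w = v @ replicate (2^m - 2^(m-l)) False"
    by auto
  obtain S where S: "S \<subseteq> {1..m-l}" "int (card S) \<le> int r - int l" "v = bprod (m-l) S"
    using Grows_mem[OF v(1)] by blast
  have lv: "length v = 2^(m-l)" using S(3) bprod_len by simp
  show ?thesis
  proof (intro exI conjI allI impI)
    show "S \<subseteq> {1..m-l}" by (rule S(1))
    show "card S \<le> r" using S(2) by linarith
    show "2^(m-l) \<le> length w" using v lv by simp
    fix k assume "k < (2::nat)^(m-l)"
    then show "w ! k = mono_of S k" using v lv S bprod_nth by (simp add: nth_append)
  qed
qed

lemma card_le_s: "S \<subseteq> {1..s} \<Longrightarrow> card S \<le> s"
proof -
  assume "S \<subseteq> {1..s}"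
  then have "card S \<le> card {1..s}" by (intro card_mono) auto
  then show ?thesis by simp
qed

lemma row_exists:
  assumes "S \<subseteq> {1..m-l}" "card S \<le> r" "l \<le> m"
  shows "\<exists>w\<in>Mrows m l r. 2^(m-l) \<le> length w \<and> (\<forall>k<2^(m-l). w ! k = mono_of S k)"
proof -
  have cs: "card S \<le> m - l" using card_le_s[OF assms(1)] .
  have mem: "\<exists>w\<in>Mrows m l r. \<exists>a'. w = bprod (m-l) S @ a'"
  proof (cases "r - card S < l")
    case True
    define i where "i = r - card S"
    have "int r - int i = int (card S)" using assms(2) i_def by simp
    then have B: "bprod (m-l) S \<in> Brows (m-l) (int r - int i)"
      unfolding Brows_def using assms(1) cs by auto
    obtain a' where a': "wrep (2^(l-i-1)) (i+1) = True # a'" using wrep_cons by force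
    have "kron (wrep (2^(l-i-1)) (i+1)) (bprod (m-l) S) \<in>
       {kron (wrep (2^(l-i-1)) (i+1)) v | v. v \<in> Brows (m-l) (int r - int i)}"
      using B by blast
    then have "kron (wrep (2^(l-i-1)) (i+1)) (bprod (m-l) S) \<in> Mrows m l r"
      unfolding Mrows_def using True i_def by (intro UnI1 UN_I[of i]) auto
    then show ?thesis using a' kron_first by auto
  next
    case False
    have B0: "bprod (m-l) S \<in> Brows (m-l) (int (card S))"
      unfolding Brows_def using assms(1) cs by auto
    have "card S + l \<le> r" using False assms(2) by linarith
    then have "int (card S) \<in> {0..int r - int l}" by auto
    then have B: "bprod (m-l) S \<in> Grows (m-l) (int r - int l)"
      unfolding Grows_def using B0 by (rule UN_I)
    have "bprod (m-l) S @ replicate (2^m - 2^(m-l)) False \<in>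
       {v @ replicate (2^m - 2^(m-l)) False | v. v \<in> Grows (m-l) (int r - int l)}"
      using B by blast
    then have "bprod (m-l) S @ replicate (2^m - 2^(m-l)) False \<in> Mrows m l r"
      unfolding Mrows_def by (rule UnI2)
    then show ?thesis by blast
  qed
  then obtain w a' where w: "w \<in> Mrows m l r" "w = bprod (m-l) S @ a'" by blast
  show ?thesis
  proof (intro bexI[OF _ w(1)] conjI allI impI)
    show "2^(m-l) \<le> length w" using w(2) bprod_len by simp
    fix k assume "k < (2::nat)^(m-l)"
    then show "w ! k = mono_of S k" using w(2) bprod_len bprod_nth assms(1) by (simp add: nth_append)
  qed
qed



lemma xor_parity:
  assumes "finite {i. U i}"
  shows "even (card {i. U i \<and> xorv v x i}) \<longleftrightarrow>
         (even (card {i. U i \<and> v i}) \<longleftrightarrow> even (card {i. U i \<and> x i}))"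
proof -
  define P where "P = {i. U i \<and> v i}"
  define Q where "Q = {i. U i \<and> x i}"
  have fP: "finite P" "finite Q" using assms unfolding P_def Q_def by (auto intro: finite_subset)
  have eq: "{i. U i \<and> xorv v x i} = (P - Q) \<union> (Q - P)"
    unfolding P_def Q_def xorv_def by auto
  have "card ((P - Q) \<union> (Q - P)) = card (P - Q) + card (Q - P)"
    by (rule card_Un_disjoint) (use fP in auto)
  moreover have "card (P - Q) = card P - card (P \<inter> Q)"
    by (rule card_Diff_subset_Int) (use fP in auto)
  moreover have "card (Q - P) = card Q - card (P \<inter> Q)"
    using card_Diff_subset_Int[of Q P] fP by (simp add: Int_commute)
  moreover have "card (P \<inter> Q) \<le> card P" "card (P \<inter> Q) \<le> card Q"
    using fP by (auto intro: card_mono)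
  ultimately show ?thesis unfolding eq P_def[symmetric] Q_def[symmetric]
    by (simp add: even_diff_nat)
qed

lemma span_even:
  assumes "v \<in> f2span R" "finite {i. U i}" "\<And>w. w \<in> R \<Longrightarrow> even (card {i. U i \<and> w i})"
  shows "even (card {i. U i \<and> v i})"
  using assms(1)
proof (induction rule: f2span.induct)
  case zero then show ?case by simp
next
  case (add v x)
  then show ?case using xor_parity[OF assms(2), of v x] assms(3) by simp
qed

lemma in_span: "v \<in> R \<Longrightarrow> v \<in> f2span R"
proof -
  assume "v \<in> R"
  then have "xorv v (\<lambda>_. False) \<in> f2span R" by (intro f2span.add f2span.zero)
  moreover have "xorv v (\<lambda>_. False) = v" by (simp add: xorv_def)
  ultimately show ?thesis by simp
qed

lemma even_low:
  assumes "T \<subseteq> {1..s}" "card T \<le> r"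
  shows "even (card {k. k < 2^(r+1) \<and> mono_of T k})"
proof (cases "\<exists>i\<in>T. i > r + 1")
  case True
  then obtain i where i: "i \<in> T" "i > r+1" by blast
  have "{k. k < 2^(r+1) \<and> mono_of T k} = {}"
  proof -
    have "\<not> bit k (i-1)" if "k < 2^(r+1)" for k :: nat
      using bit_lt_pow[OF that] i by simp
    then show ?thesis using i unfolding mono_of_def by auto
  qed
  then show ?thesis by (simp only: card.empty) simp
next
  case False
  have "\<not> {1..r+1} \<subseteq> T"
  proof
    assume "{1..r+1} \<subseteq> T"
    then have "card {1..r+1} \<le> card T"
      using assms(1) by (intro card_mono) (auto intro: finite_subset)
    then show False using assms(2) by simp
  qed
  then obtain i0 where i0: "i0 \<in> {1..r+1}" "i0 \<notin> T" by blast
  show ?thesis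
  proof (rule flip_even[where p="i0 - 1"])
    show "i0 - 1 < r + 1" using i0 by auto
    fix k k' :: nat
    assume h: "\<And>t. t \<noteq> i0 - 1 \<Longrightarrow> bit k t = bit k' t"
    have "bit k (i-1) = bit k' (i-1)" if "i \<in> T" for i
    proof -
      have "i \<ge> 1" using that assms(1) by auto
      moreover have "i \<noteq> i0" using i0 that by auto
      moreover have "i0 \<ge> 1" using i0 by auto
      ultimately have "i - 1 \<noteq> i0 - 1" by arith
      then show ?thesis using h by blast
    qed
    then show "mono_of T k = mono_of T k'" unfolding mono_of_def by blast
  qed
qed

theorem mainTheorem11:
  fixes m l r :: nat
  assumes "1 \<le> l" and "l \<le> m" and "r < m - l"
  shows "free_distance (dual_code (convcode m l r)) = 2 ^ (r + 1)"
proof -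
  define s where "s = m - l"
  define n :: nat where "n = 2^s"
  have rs: "r + 1 \<le> s" using assms(3) s_def by simp
  have qn: "(2::nat)^(r+1) \<le> n" unfolding n_def using rs by (intro power_increasing) auto
  have npos: "n > 0" unfolding n_def by simp
  define u0 :: "nat \<Rightarrow> bool" where "u0 = (\<lambda>i. i < 2^(r+1))"
  have fu0: "finite {i. u0 i}" unfolding u0_def by simp
  have u0_dual: "u0 \<in> dual_code (convcode m l r)"
    unfolding dual_code_def
  proof (intro CollectI conjI ballI)
    show "u0 \<in> Gamma2" using fu0 by (simp add: Gamma2_def)
    fix v assume "v \<in> convcode m l r"
    then show "even (card {i. u0 i \<and> v i})" unfolding convcode_def
    proof (rule span_even[OF _ fu0])
      fix w assume "w \<in> Grows_inf m l r"
      then obtain j x where jx: "x \<in> Mrows m l r" "w = shift_row (2^(m-l)) j x"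
        unfolding Grows_inf_def by blast
      obtain S where S: "S \<subseteq> {1..s}" "card S \<le> r" "n \<le> length x"
        "\<forall>k<n. x ! k = mono_of S k"
        using row_first_block[OF jx(1) assms(2)] unfolding s_def n_def by blast
      show "even (card {i. u0 i \<and> w i})"
      proof (cases "j = 0")
        case True
        have "{i. u0 i \<and> w i} = {k. k < 2^(r+1) \<and> mono_of S k}"
          using S qn unfolding jx(2) True u0_def shift_row_def s_def[symmetric] n_def[symmetric]
          by auto
        then show ?thesis using even_low[OF S(1) S(2)] by simp
      next
        case False
        have jn: "n \<le> j * n" using False by simp
        then have jq: "(2::nat)^(r+1) \<le> j * n" using qn by linarith
        have "{i. u0 i \<and> w i} = {}"
          using jq unfolding jx(2) u0_def shift_row_def s_def[symmetric] n_def[symmetric]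
          by auto
        then show ?thesis by (simp only: card.empty) simp
      qed
    qed
  qed
  have u0nz: "u0 \<noteq> (\<lambda>_. False)" unfolding u0_def by (metis zero_less_numeral zero_less_power)
  have wu0: "weight u0 = 2^(r+1)" unfolding weight_def u0_def by simp
  have lower: "2^(r+1) \<le> weight u" if u: "u \<in> dual_code (convcode m l r)" "u \<noteq> (\<lambda>_. False)" for u
  proof -
    define F where "F = {i. u i}"
    have fF: "finite F" using u(1) unfolding F_def dual_code_def Gamma2_def by auto
    have neF: "F \<noteq> {}" using u(2) unfolding F_def by auto
    define M where "M = Max F"
    have MF: "M \<in> F" using fF neF M_def by simp
    have leM: "i \<le> M" if "u i" for i using fF F_def M_def that by simp
    define J where "J = M div n"
    have MJ: "M = J * n + M mod n" unfolding J_def by simp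
    have Mlt: "M < J * n + n" using MJ npos by (metis add_less_cancel_left mod_less_divisor)
    define A where "A = {k. k < n \<and> u (J * n + k)}"
    have Asub: "A \<subseteq> {..<2^s}" unfolding A_def n_def by auto
    have Ane: "A \<noteq> {}"
    proof -
      have "M mod n \<in> A" unfolding A_def using MF F_def MJ npos by simp
      then show ?thesis by blast
    qed
    have inj: "inj_on (\<lambda>k. J * n + k) X" for X by (simp add: inj_on_def)
    have Aeven: "even (card {k\<in>A. mono_of T k})" if T: "T \<subseteq> {1..s}" "card T \<le> r" for T
    proof -
      obtain x where x: "x \<in> Mrows m l r" "n \<le> length x" "\<forall>k<n. x ! k = mono_of T k"
        using row_exists[of T m l r] T assms(2) unfolding s_def n_def by blast
      define v where "v = shift_row n J x"
      have "v \<in> convcode m l r" unfolding convcode_def v_def n_def s_def Grows_inf_def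
        by (rule in_span) (use x(1) in blast)
      then have ev: "even (card {i. u i \<and> v i})" using u(1) unfolding dual_code_def by blast
      have "{i. u i \<and> v i} = (\<lambda>k. J * n + k) ` {k\<in>A. mono_of T k}"
      proof (rule set_eqI, rule iffI)
        fix i assume i: "i \<in> {i. u i \<and> v i}"
        then have "i \<le> M" using leM by blast
        then have "i < J * n + n" using Mlt by simp
        moreover have "J * n \<le> i" "x ! (i - J * n)" using i unfolding v_def shift_row_def by auto
        ultimately show "i \<in> (\<lambda>k. J * n + k) ` {k\<in>A. mono_of T k}"
          using i x(3) unfolding A_def
          by (intro image_eqI[of _ _ "i - J * n"]) auto
      next
        fix i assume "i \<in> (\<lambda>k. J * n + k) ` {k\<in>A. mono_of T k}"
        then obtain k where k: "k < n" "u (J * n + k)" "mono_of T k" "i = J * n + k"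
          unfolding A_def by auto
        then show "i \<in> {i. u i \<and> v i}" using x(2,3) unfolding v_def shift_row_def by auto
      qed
      then have "card {i. u i \<and> v i} = card {k\<in>A. mono_of T k}"
        using card_image[OF inj] by simp
      then show ?thesis using ev by simp
    qed
    have "2^(r+1) \<le> card A" by (rule rm_dist[OF Asub Ane Aeven])
    also have "card A = card ((\<lambda>k. J * n + k) ` A)" using card_image[OF inj] by simp
    also have "\<dots> \<le> card F"
      by (rule card_mono[OF fF]) (auto simp: A_def F_def)
    finally show ?thesis unfolding weight_def F_def .
  qed
  have mem: "2^(r+1) \<in> {weight u | u. u \<in> dual_code (convcode m l r) \<and> u \<noteq> (\<lambda>_. False)}"
    unfolding wu0[symmetric] using u0_dual u0nz by blast
  show ?thesis unfolding free_distance_def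
    by (rule cInf_eq_minimum[OF mem]) (use lower in blast)
qed

end
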